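(* There exists $f\in H^2_\tau(\mathcal S)$ admitting an uncountable family of Pauli partners $g\in H^2_\tau(\mathcal S)$, no two of which are constant multiples of one another.
   Context: $\mathcal S=\{z\in\mathbb C:|\mathrm{Im}\,z|<1\}$ is the strip, and $H^2_\tau(\mathcal S)$ is the space of holomorphic functions $f$ on $\mathcal S$ with $\sup_{|y|<1}\int_{\mathbb R}|f(t+iy)|^2\,\mathrm dt<\infty$; such functions restrict to functions in $L^2(\mathbb R)$, and the Fourier transform $\widehat f$ of this restriction is defined. A Pauli partner of $f$ is a function $g$ with $|g(x)|=|f(x)|$ for all $x\in\mathbb R$ and $|\widehat g(\xi)|=|\widehat f(\xi)|$ for all $\xi\in\mathbb R$. *)

theory Defs
  imports "HOL-Analysis.Analysis"
begin

definition strip :: "complex set" where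
  "strip = {z. \<bar>Im z\<bar> < 1}"

definition H2_strip :: "(complex \<Rightarrow> complex) set" where
  "H2_strip = {f. f holomorphic_on strip \<and>
     (\<exists>C::real. \<forall>y::real. \<bar>y\<bar> < 1 \<longrightarrow>
        (\<integral>\<^sup>+ t. ennreal ((norm (f (complex_of_real t + \<i> * complex_of_real y)))\<^sup>2) \<partial>lborel) \<le> ennreal C)}"

definition fourier_trunc :: "(real \<Rightarrow> complex) \<Rightarrow> real \<Rightarrow> real \<Rightarrow> complex" where
  "fourier_trunc u R \<xi> =
     set_lebesgue_integral lborel {-R..R} (\<lambda>x. u x * cis (- 2 * pi * x * \<xi>))"

text \<open>h is (a representative of) the L^2 (Plancherel) Fourier transform of u:
  the truncated Fourier integrals converge to h in L^2(R).\<close>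
definition is_fourier_L2 :: "(real \<Rightarrow> complex) \<Rightarrow> (real \<Rightarrow> complex) \<Rightarrow> bool" where
  "is_fourier_L2 u h \<longleftrightarrow> h \<in> borel_measurable lborel \<and>
     ((\<lambda>R. \<integral>\<^sup>+ \<xi>. ennreal ((norm (fourier_trunc u R \<xi> - h \<xi>))\<^sup>2) \<partial>lborel) \<longlongrightarrow> 0) at_top"

definition restr_R :: "(complex \<Rightarrow> complex) \<Rightarrow> real \<Rightarrow> complex" where
  "restr_R f = (\<lambda>x. f (complex_of_real x))"

text \<open>Since the L^2 Fourier transform is only defined up to null sets, we ask for
  representatives whose moduli agree at every point.\<close>
definition pauli_partner :: "(complex \<Rightarrow> complex) \<Rightarrow> (complex \<Rightarrow> complex) \<Rightarrow> bool" where
  "pauli_partner f g \<longleftrightarrow>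
     (\<forall>x::real. norm (g (complex_of_real x)) = norm (f (complex_of_real x))) \<and>
     (\<exists>F G. is_fourier_L2 (restr_R f) F \<and> is_fourier_L2 (restr_R g) G \<and>
            (\<forall>\<xi>. norm (G \<xi>) = norm (F \<xi>)))"

end

theory Submission
  imports Defs "HOL-Complex_Analysis.Complex_Analysis" "HOL-Probability.Sinc_Integral"
begin

definition w :: "real \<Rightarrow> real" where "w x = inverse (1 + x\<^sup>2)"

lemma w_pos: "w x > 0" unfolding w_def by (simp add: add_pos_nonneg)
lemma w_le1: "w x \<le> 1" unfolding w_def by (simp add: add_pos_nonneg inverse_le_1_iff)
lemma w_even: "w (-x) = w x" unfolding w_def by simp
lemma w_cont: "continuous_on A w" unfolding w_def
  by (intro continuous_intros) (smt (verit) zero_le_power2)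
lemma w_meas[measurable]: "w \<in> borel_measurable borel"
  using w_cont[of UNIV] by (simp add: borel_measurable_continuous_onI)

lemma w_int: "integrable lborel w"
  using integrable_inverse_1_plus_square unfolding set_integrable_def einterval_eq_UNIV w_def
  by simp

lemma w_integral: "integral\<^sup>L lborel w = pi"
  using LBINT_inverse_1_plus_square unfolding interval_lebesgue_integral_def set_lebesgue_integral_def einterval_eq_UNIV w_def
  by simp

lemma w_nn: "(\<integral>\<^sup>+ x. ennreal (c * w x) \<partial>lborel) = ennreal (c * pi)" if "c \<ge> 0"
proof -
  have "(\<integral>\<^sup>+ x. ennreal (c * w x) \<partial>lborel) = ennreal (integral\<^sup>L lborel (\<lambda>x. c * w x))"
    by (rule nn_integral_eq_integral) (use w_int that less_imp_le[OF w_pos] in \<open>auto intro!: AE_I2\<close>)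
  also have "integral\<^sup>L lborel (\<lambda>x. c * w x) = c * pi" using w_integral by simp
  finally show ?thesis .
qed

lemma w_tendsto: "(w \<longlongrightarrow> 0) at_top"
proof -
  have "filterlim (\<lambda>x::real. 1 + x\<^sup>2) at_top at_top"
    by (intro filterlim_tendsto_add_at_top[OF tendsto_const]) (simp add: filterlim_pow_at_top filterlim_ident)
  then show ?thesis unfolding w_def by (rule tendsto_inverse_0_at_top)
qed

definition tR :: "real \<Rightarrow> real" where "tR R = set_lebesgue_integral lborel {R<..} w"

lemma tR_tendsto: "(tR \<longlongrightarrow> 0) at_top"
proof -
  have "((\<lambda>R. integral\<^sup>L lborel (\<lambda>x. indicator {R<..} x *\<^sub>R w x)) \<longlongrightarrow> integral\<^sup>L lborel (\<lambda>x::real. 0::real)) at_top"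
  proof (rule integral_dominated_convergence_at_top[where w = w])
    show "AE x in lborel. ((\<lambda>i. indicator {i<..} x *\<^sub>R w x) \<longlongrightarrow> 0) at_top"
    proof (rule AE_I2)
      fix x :: real
      have "\<forall>\<^sub>F i in at_top. indicator {i<..} x *\<^sub>R w x = (0::real)"
        using eventually_ge_at_top[of x] by eventually_elim (auto simp: indicator_def)
      then show "((\<lambda>i. indicator {i<..} x *\<^sub>R w x) \<longlongrightarrow> 0) at_top"
        by (rule tendsto_eventually)
    qed
    show "\<forall>\<^sub>F i in at_top. AE x in lborel. norm (indicator {i<..} x *\<^sub>R w x) \<le> w x"
      using w_pos by (auto simp: indicator_def less_imp_le)
  qed (use w_int in auto)
  then show ?thesis unfolding tR_def set_lebesgue_integral_def by simp
qed

lemma tR_nonneg: "tR R \<ge> 0"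
  unfolding tR_def set_lebesgue_integral_def
  by (rule integral_nonneg_AE) (use w_pos in \<open>auto simp: indicator_def less_imp_le\<close>)

lemma cis_deriv: "((\<lambda>x. cis (c * x)) has_vector_derivative (\<i> * of_real c * cis (c * x))) (at x)"
proof -
  have "((\<lambda>z. exp (\<i> * of_real c * z)) has_field_derivative (\<i> * of_real c * exp (\<i> * of_real c * of_real x))) (at (of_real x))"
    by (auto intro!: derivative_eq_intros)
  from has_vector_derivative_real_field[OF this]
  have "((\<lambda>x. exp (\<i> * of_real c * of_real x)) has_vector_derivative (\<i> * of_real c * exp (\<i> * of_real c * of_real x))) (at x)" .
  moreover have "\<And>x. cis (c * x) = exp (\<i> * of_real c * of_real x)"
    by (simp add: cis_conv_exp mult.assoc)
  ultimately show ?thesis by simp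
qed

lemma cis_cont: "continuous_on A (\<lambda>x. cis (c * x))"
  by (intro continuous_intros)

lemma cis_meas[measurable]: "cis \<in> borel_measurable borel"
  by (rule borel_measurable_continuous_onI) (intro continuous_intros)

lemma tail_int:
  fixes u :: "real \<Rightarrow> complex"
  assumes um: "u \<in> borel_measurable borel" and ub: "\<And>x. norm (u x) \<le> M * w x"
  shows "integrable lborel (\<lambda>x. u x * cis (c * x))"
proof (rule Bochner_Integration.integrable_bound[of _ "\<lambda>x. M * w x"])
  show "integrable lborel (\<lambda>x. M * w x)" using w_int by simp
  show "(\<lambda>x. u x * cis (c * x)) \<in> borel_measurable lborel" using um by measurable
  show "AE x in lborel. norm (u x * cis (c * x)) \<le> norm (M * w x)"
    using ub by (auto simp: norm_mult intro!: AE_I2 order.trans[OF _ abs_ge_self])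
qed

lemma tail_norm:
  fixes u :: "real \<Rightarrow> complex"
  assumes um: "u \<in> borel_measurable borel" and ub: "\<And>x. norm (u x) \<le> M * w x"
  shows "norm (set_lebesgue_integral lborel {R<..} (\<lambda>x. u x * cis (c * x))) \<le> M * tR R"
proof -
  have i: "set_integrable lborel {R<..} (\<lambda>x. u x * cis (c * x))"
    unfolding set_integrable_def by (rule integrable_mult_indicator) (auto intro: tail_int[OF um ub])
  have iw: "set_integrable lborel {R<..} (\<lambda>x. M * w x)"
    unfolding set_integrable_def by (rule integrable_mult_indicator) (use w_int in auto)
  have "norm (set_lebesgue_integral lborel {R<..} (\<lambda>x. u x * cis (c * x))) \<le> (\<integral>x\<in>{R<..}. norm (u x * cis (c * x))\<partial>lborel)"
    by (rule set_integral_norm_bound[OF i])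
  also have "\<dots> \<le> (\<integral>x\<in>{R<..}. M * w x \<partial>lborel)"
    by (rule set_integral_mono[OF set_integrable_norm[OF i] iw]) (use ub in \<open>auto simp: norm_mult\<close>)
  also have "\<dots> = M * tR R" unfolding tR_def by simp
  finally show ?thesis .
qed


lemma tail_ibp:
  fixes u u' :: "real \<Rightarrow> complex"
  assumes der: "\<And>x. (u has_vector_derivative u' x) (at x)"
    and cu: "continuous_on UNIV u" and cu': "continuous_on UNIV u'"
    and ub: "\<And>x. norm (u x) \<le> M * w x" and ub': "\<And>x. norm (u' x) \<le> M' * w x"
    and c: "c \<noteq> 0"
  shows "norm (set_lebesgue_integral lborel {R<..} (\<lambda>x. u x * cis (c * x))) \<le> (norm (u R) + M' * tR R) / \<bar>c\<bar>"
proof -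
  define k where "k = \<i> * complex_of_real c"
  have k0: "k \<noteq> 0" using c by (simp add: k_def)
  have nk: "norm k = \<bar>c\<bar>" by (simp add: k_def norm_mult)
  define \<Phi> where "\<Phi> x = u x * cis (c * x) / k" for x
  define \<phi> where "\<phi> x = u' x * cis (c * x) / k + u x * cis (c * x)" for x
  have um: "u \<in> borel_measurable borel" using cu by (rule borel_measurable_continuous_onI)
  have um': "u' \<in> borel_measurable borel" using cu' by (rule borel_measurable_continuous_onI)
  have d\<Phi>: "(\<Phi> has_vector_derivative \<phi> x) (at x)" for x
  proof -
    have "((\<lambda>x. u x * cis (c * x)) has_vector_derivative (u x * (\<i> * of_real c * cis (c * x)) + u' x * cis (c * x))) (at x)"
      by (rule has_vector_derivative_mult[OF der cis_deriv])
    then have "((\<lambda>x. u x * cis (c * x) / k) has_vector_derivative ((u x * (\<i> * of_real c * cis (c * x)) + u' x * cis (c * x)) / k)) (at x)"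
      by (rule has_vector_derivative_divide)
    moreover have "(u x * (\<i> * of_real c * cis (c * x)) + u' x * cis (c * x)) / k = \<phi> x"
      using k0 unfolding \<phi>_def k_def by (simp add: field_simps)
    ultimately show ?thesis unfolding \<Phi>_def by simp
  qed
  have c\<phi>: "continuous_on UNIV \<phi>" unfolding \<phi>_def
    by (intro continuous_intros cu cu') (use k0 in auto)
  have c\<Phi>: "continuous_on UNIV \<Phi>" unfolding \<Phi>_def
    by (intro continuous_intros cu) (use k0 in auto)
  have i1: "integrable lborel (\<lambda>x. u' x * cis (c * x))" by (rule tail_int[OF um' ub'])
  have i2: "integrable lborel (\<lambda>x. u x * cis (c * x))" by (rule tail_int[OF um ub])
  have si1: "set_integrable lborel {R<..} (\<lambda>x. u' x * cis (c * x) / k)"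
    unfolding set_integrable_def by (rule integrable_mult_indicator) (use i1 in auto)
  have si2: "set_integrable lborel {R<..} (\<lambda>x. u x * cis (c * x))"
    unfolding set_integrable_def by (rule integrable_mult_indicator) (use i2 in auto)
  have "interval_lebesgue_integral lborel (ereal R) \<infinity> \<phi> = 0 - \<Phi> R"
  proof (rule interval_integral_FTC_integrable)
    show "(\<Phi> has_vector_derivative \<phi> x) (at x)" for x by (rule d\<Phi>)
    show "isCont \<phi> x" for x using c\<phi> by (simp add: continuous_on_eq_continuous_at)
    show "set_integrable lborel (einterval (ereal R) \<infinity>) \<phi>"
      unfolding einterval_eq_Ici \<phi>_def by (rule set_integral_add(1)[OF si1 si2])
    show "((\<Phi> \<circ> real_of_ereal) \<longlongrightarrow> \<Phi> R) (at_right (ereal R))"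
      unfolding ereal_tendsto_simps
    proof -
      have "(\<Phi> \<longlongrightarrow> \<Phi> R) (at R)" using c\<Phi> by (simp add: continuous_on_eq_continuous_at isCont_def)
      then show "(\<Phi> \<longlongrightarrow> \<Phi> R) (at_right R)" by (rule tendsto_mono[OF at_within_le_at])
    qed
    show "((\<Phi> \<circ> real_of_ereal) \<longlongrightarrow> 0) (at_left \<infinity>)"
      unfolding ereal_tendsto_simps
    proof (rule Lim_null_comparison)
      show "\<forall>\<^sub>F x in at_top. norm (\<Phi> x) \<le> M * w x / \<bar>c\<bar>"
        using ub c by (auto simp: \<Phi>_def norm_mult norm_divide nk divide_right_mono)
      show "((\<lambda>x. M * w x / \<bar>c\<bar>) \<longlongrightarrow> 0) at_top"
        using tendsto_mult[OF tendsto_const[of M] w_tendsto] by (auto intro: tendsto_divide_zero)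
    qed
  qed simp
  then have eq: "set_lebesgue_integral lborel {R<..} \<phi> = - \<Phi> R"
    unfolding interval_lebesgue_integral_def einterval_eq_Ici by simp
  have "set_lebesgue_integral lborel {R<..} \<phi> = set_lebesgue_integral lborel {R<..} (\<lambda>x. u' x * cis (c * x) / k) + set_lebesgue_integral lborel {R<..} (\<lambda>x. u x * cis (c * x))"
    unfolding \<phi>_def by (rule set_integral_add(2)[OF si1 si2])
  also have "set_lebesgue_integral lborel {R<..} (\<lambda>x. u' x * cis (c * x) / k) = set_lebesgue_integral lborel {R<..} (\<lambda>x. u' x * cis (c * x)) / k"
    by (rule set_integral_divide_zero)
  finally have "set_lebesgue_integral lborel {R<..} (\<lambda>x. u x * cis (c * x)) = - \<Phi> R - set_lebesgue_integral lborel {R<..} (\<lambda>x. u' x * cis (c * x)) / k"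
    using eq by (simp add: algebra_simps)
  then have "norm (set_lebesgue_integral lborel {R<..} (\<lambda>x. u x * cis (c * x))) \<le> norm (\<Phi> R) + norm (set_lebesgue_integral lborel {R<..} (\<lambda>x. u' x * cis (c * x))) / \<bar>c\<bar>"
    using norm_triangle_ineq4[of "- \<Phi> R" "set_lebesgue_integral lborel {R<..} (\<lambda>x. u' x * cis (c * x)) / k"]
    by (simp add: norm_divide nk)
  also have "norm (\<Phi> R) = norm (u R) / \<bar>c\<bar>" by (simp add: \<Phi>_def norm_mult norm_divide nk)
  also have "norm (set_lebesgue_integral lborel {R<..} (\<lambda>x. u' x * cis (c * x))) \<le> M' * tR R"
    by (rule tail_norm[OF um' ub'])
  finally show ?thesis using c by (simp add: add_divide_distrib divide_right_mono)
qed

definition FT :: "(real \<Rightarrow> complex) \<Rightarrow> real \<Rightarrow> complex" where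
  "FT u \<xi> = (\<integral>x. u x * cis (- 2 * pi * x * \<xi>) \<partial>lborel)"

lemma FT_meas:
  fixes u :: "real \<Rightarrow> complex" assumes [measurable]: "u \<in> borel_measurable borel"
  shows "FT u \<in> borel_measurable lborel"
  unfolding FT_def by measurable

lemma wb1: "\<xi>\<^sup>2 \<le> 1 \<Longrightarrow> 1 \<le> 2 * w \<xi>"
proof -
  assume True: "\<xi>\<^sup>2 \<le> 1"
  have p: "0 < 1 + \<xi>\<^sup>2" by (simp add: add_pos_nonneg)
  then have "1 \<le> 2 / (1 + \<xi>\<^sup>2)" using True by (simp add: le_divide_eq)
  then show ?thesis unfolding w_def by (simp add: divide_inverse)
qed

lemma wb2: "\<not> \<xi>\<^sup>2 \<le> 1 \<Longrightarrow> 1 / \<xi>\<^sup>2 \<le> 2 * w \<xi>"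
proof -
  assume False: "\<not> \<xi>\<^sup>2 \<le> 1"
  have p: "0 < \<xi>\<^sup>2" using False by (cases "\<xi> = 0") auto
  have p2: "0 < 1 + \<xi>\<^sup>2" by (simp add: add_pos_nonneg)
  have "1 + \<xi>\<^sup>2 \<le> 2 * \<xi>\<^sup>2" using False by simp
  then have "1 / \<xi>\<^sup>2 \<le> 2 / (1 + \<xi>\<^sup>2)" using p p2 by (simp add: divide_le_eq le_divide_eq mult.commute)
  then show ?thesis unfolding w_def by (simp add: divide_inverse)
qed

lemma fourier_L2_of_bounds:
  fixes u u' :: "real \<Rightarrow> complex"
  assumes der: "\<And>x. (u has_vector_derivative u' x) (at x)"
    and cu: "continuous_on UNIV u" and cu': "continuous_on UNIV u'"
    and ub: "\<And>x. norm (u x) \<le> M * w x" and ub': "\<And>x. norm (u' x) \<le> M' * w x"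
  shows "is_fourier_L2 u (FT u)"
proof -
  have um[measurable]: "u \<in> borel_measurable borel" using cu by (rule borel_measurable_continuous_onI)
  have um': "u' \<in> borel_measurable borel" using cu' by (rule borel_measurable_continuous_onI)
  have M0: "M \<ge> 0" using ub[of 0] w_pos[of 0] by (smt (verit) norm_ge_zero zero_le_mult_iff)
  have M'0: "M' \<ge> 0" using ub'[of 0] w_pos[of 0] by (smt (verit) norm_ge_zero zero_le_mult_iff)
  define v where "v x = u (- x)" for x
  define v' where "v' x = - u' (- x)" for x
  have derv: "(v has_vector_derivative v' x) (at x)" for x
  proof -
    have "((u \<circ> uminus) has_vector_derivative (-1) *\<^sub>R u' (- x)) (at x)"
      by (rule vector_diff_chain_at) (auto intro!: derivative_eq_intros der)
    then show ?thesis by (simp add: v_def[abs_def] v'_def o_def)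
  qed
  have cv: "continuous_on UNIV v" unfolding v_def by (intro continuous_on_compose2[OF cu]) (auto intro: continuous_intros)
  have cv': "continuous_on UNIV v'" unfolding v'_def by (intro continuous_intros continuous_on_compose2[OF cu']) (auto intro: continuous_intros)
  have vm: "v \<in> borel_measurable borel" using cv by (rule borel_measurable_continuous_onI)
  have vb: "norm (v x) \<le> M * w x" for x using ub[of "-x"] by (simp add: v_def w_even)
  have vb': "norm (v' x) \<le> M' * w x" for x using ub'[of "-x"] by (simp add: v'_def w_even)
  define e where "e R = 2 * (M * w R + (M + M') * tR R)" for R
  have e0: "e R \<ge> 0" for R unfolding e_def using M0 M'0 tR_nonneg[of R] w_pos[of R] by simp
  have bound: "(norm (fourier_trunc u R \<xi> - FT u \<xi>))\<^sup>2 \<le> (e R)\<^sup>2 * (2 * w \<xi>)" if R0: "R \<ge> 0" for R \<xi>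
  proof -
    define c where "c = - 2 * pi * \<xi>"
    have cc: "cis (- 2 * pi * x * \<xi>) = cis (c * x)" for x by (simp add: c_def algebra_simps)
    define IR where "IR = set_lebesgue_integral lborel {R<..} (\<lambda>x. u x * cis (c * x))"
    define IL where "IL = set_lebesgue_integral lborel {R<..} (\<lambda>x. v x * cis ((- c) * x))"
    have iu: "integrable lborel (\<lambda>x. u x * cis (c * x))" by (rule tail_int[OF um ub])
    have ILeq: "IL = set_lebesgue_integral lborel {..<-R} (\<lambda>x. u x * cis (c * x))"
      unfolding IL_def set_integral_reflect[of "{..<-R}"] by (simp add: v_def greaterThan_def)
    have dec: "FT u \<xi> = fourier_trunc u R \<xi> + IR + IL"
    proof -
      have "(\<lambda>x. u x * cis (c * x)) = (\<lambda>x. indicator {-R..R} x *\<^sub>R (u x * cis (c * x)) + indicator {R<..} x *\<^sub>R (u x * cis (c * x)) + indicator {..<-R} x *\<^sub>R (u x * cis (c * x)))"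
        using R0 by (auto simp: fun_eq_iff indicator_def)
      then have "FT u \<xi> = integral\<^sup>L lborel (\<lambda>x. indicator {-R..R} x *\<^sub>R (u x * cis (c * x)) + indicator {R<..} x *\<^sub>R (u x * cis (c * x)) + indicator {..<-R} x *\<^sub>R (u x * cis (c * x)))"
        unfolding FT_def cc by metis
      also have "\<dots> = integral\<^sup>L lborel (\<lambda>x. indicator {-R..R} x *\<^sub>R (u x * cis (c * x))) + integral\<^sup>L lborel (\<lambda>x. indicator {R<..} x *\<^sub>R (u x * cis (c * x))) + integral\<^sup>L lborel (\<lambda>x. indicator {..<-R} x *\<^sub>R (u x * cis (c * x)))"
      proof -
        have i1: "integrable lborel (\<lambda>x. indicator {-R..R} x *\<^sub>R (u x * cis (c * x)))"
          by (rule integrable_mult_indicator) (use iu in auto)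
        have i2: "integrable lborel (\<lambda>x. indicator {R<..} x *\<^sub>R (u x * cis (c * x)))"
          by (rule integrable_mult_indicator) (use iu in auto)
        have i3: "integrable lborel (\<lambda>x. indicator {..<-R} x *\<^sub>R (u x * cis (c * x)))"
          by (rule integrable_mult_indicator) (use iu in auto)
        show ?thesis using Bochner_Integration.integral_add[OF Bochner_Integration.integrable_add[OF i1 i2] i3] Bochner_Integration.integral_add[OF i1 i2] by simp
      qed
      finally show ?thesis
        unfolding fourier_trunc_def IR_def ILeq set_lebesgue_integral_def cc by simp
    qed
    have nR1: "norm IR \<le> M * tR R" unfolding IR_def by (rule tail_norm[OF um ub])
    have nL1: "norm IL \<le> M * tR R" unfolding IL_def by (rule tail_norm[OF vm vb])
    have n1: "norm (fourier_trunc u R \<xi> - FT u \<xi>) \<le> e R"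
    proof -
      have "norm (fourier_trunc u R \<xi> - FT u \<xi>) = norm (IR + IL)" by (simp add: dec norm_minus_commute add.commute)
      also have "\<dots> \<le> norm IR + norm IL" by (rule norm_triangle_ineq)
      also have "\<dots> \<le> e R" using nR1 nL1 M0 M'0 w_pos[of R] tR_nonneg[of R] unfolding e_def
        by (smt (verit) mult_nonneg_nonneg mult_right_mono)
      finally show ?thesis .
    qed
    have n2: "norm (fourier_trunc u R \<xi> - FT u \<xi>) \<le> e R / \<bar>\<xi>\<bar>" if \<xi>0: "\<xi> \<noteq> 0"
    proof -
      have c0: "c \<noteq> 0" using \<xi>0 by (simp add: c_def)
      have nc: "\<bar>c\<bar> = 2 * pi * \<bar>\<xi>\<bar>" by (simp add: c_def abs_mult)
      have nR2: "norm IR \<le> (norm (u R) + M' * tR R) / \<bar>c\<bar>" unfolding IR_def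
        by (rule tail_ibp[OF der cu cu' ub ub' c0])
      have nL2: "norm IL \<le> (norm (v R) + M' * tR R) / \<bar>- c\<bar>" unfolding IL_def
        by (rule tail_ibp[OF derv cv cv' vb vb']) (use c0 in simp)
      have "norm (fourier_trunc u R \<xi> - FT u \<xi>) = norm (IR + IL)" by (simp add: dec norm_minus_commute add.commute)
      also have "\<dots> \<le> norm IR + norm IL" by (rule norm_triangle_ineq)
      also have "\<dots> \<le> (norm (u R) + M' * tR R) / \<bar>c\<bar> + (norm (v R) + M' * tR R) / \<bar>c\<bar>"
        using nR2 nL2 by simp
      also have "\<dots> \<le> (M * w R + M' * tR R) / \<bar>c\<bar> + (M * w R + M' * tR R) / \<bar>c\<bar>"
        using ub[of R] vb[of R] c0 by (intro add_mono divide_right_mono) auto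
      also have "\<dots> = e R / (2 * pi * \<bar>\<xi>\<bar>) - 2 * M * tR R / (2 * pi * \<bar>\<xi>\<bar>)"
        using \<xi>0 unfolding nc e_def by (simp add: field_simps)
      also have "\<dots> \<le> e R / (2 * pi * \<bar>\<xi>\<bar>)"
        using M0 tR_nonneg[of R] \<xi>0 by simp
      also have "\<dots> \<le> e R / \<bar>\<xi>\<bar>"
        using e0[of R] \<xi>0 pi_gt3 by (intro divide_left_mono) (auto simp: mult_pos_pos)
      finally show ?thesis .
    qed
    define N where "N = norm (fourier_trunc u R \<xi> - FT u \<xi>)"
    have N0: "N \<ge> 0" by (simp add: N_def)
    have a: "N\<^sup>2 \<le> (e R)\<^sup>2" using n1 N0 unfolding N_def[symmetric] by (simp add: power_mono)
    have "N\<^sup>2 \<le> (e R)\<^sup>2 * (2 * w \<xi>)"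
    proof (cases "\<xi>\<^sup>2 \<le> 1")
      case True
      show ?thesis using a wb1[OF True] mult_left_mono[OF wb1[OF True], of "(e R)\<^sup>2"] by simp
    next
      case False
      have "\<xi> \<noteq> 0" using False by auto
      have "N\<^sup>2 \<le> (e R / \<bar>\<xi>\<bar>)\<^sup>2" using n2[OF \<open>\<xi> \<noteq> 0\<close>] N0 unfolding N_def[symmetric] by (simp add: power_mono)
      then have b: "N\<^sup>2 \<le> (e R)\<^sup>2 * (1 / \<xi>\<^sup>2)" by (simp add: power_divide)
      show ?thesis using b mult_left_mono[OF wb2[OF False], of "(e R)\<^sup>2"] by simp
    qed
    then show ?thesis unfolding N_def .
  qed
  show ?thesis unfolding is_fourier_L2_def
  proof (intro conjI)
    show "FT u \<in> borel_measurable lborel" by (rule FT_meas[OF um])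
    have up: "\<forall>\<^sub>F R in at_top. (\<integral>\<^sup>+ \<xi>. ennreal ((norm (fourier_trunc u R \<xi> - FT u \<xi>))\<^sup>2) \<partial>lborel) \<le> ennreal ((e R)\<^sup>2 * 2 * pi)"
      using eventually_ge_at_top[of "0::real"]
    proof eventually_elim
      case (elim R)
      have "(\<integral>\<^sup>+ \<xi>. ennreal ((norm (fourier_trunc u R \<xi> - FT u \<xi>))\<^sup>2) \<partial>lborel) \<le> (\<integral>\<^sup>+ \<xi>. ennreal (((e R)\<^sup>2 * 2) * w \<xi>) \<partial>lborel)"
        using bound[OF elim] by (intro nn_integral_mono) (simp add: ennreal_leI mult.assoc)
      also have "\<dots> = ennreal ((e R)\<^sup>2 * 2 * pi)" by (rule w_nn) simp
      finally show ?case .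
    qed
    have "((\<lambda>R. (e R)\<^sup>2 * 2 * pi) \<longlongrightarrow> (0::real)\<^sup>2 * 2 * pi) at_top"
    proof -
      have "(e \<longlongrightarrow> 2 * (M * 0 + (M + M') * 0)) at_top"
        unfolding e_def[abs_def] by (intro tendsto_intros w_tendsto tR_tendsto)
      then show ?thesis by (intro tendsto_intros) simp
    qed
    then have lim: "((\<lambda>R. ennreal ((e R)\<^sup>2 * 2 * pi)) \<longlongrightarrow> 0) at_top"
      using tendsto_ennrealI by fastforce
    show "((\<lambda>R. \<integral>\<^sup>+ \<xi>. ennreal ((norm (fourier_trunc u R \<xi> - FT u \<xi>))\<^sup>2) \<partial>lborel) \<longlongrightarrow> 0) at_top"
      by (rule tendsto_sandwich[OF _ up tendsto_const lim]) simp
  qed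
qed

lemma open_strip: "open strip"
  unfolding strip_def
  by (rule open_Collect_less[of "\<lambda>z. \<bar>Im z\<bar>" "\<lambda>_. 1", simplified]) (intro continuous_intros)

lemma real_in_strip: "complex_of_real x \<in> strip" by (simp add: strip_def)

lemma w_shift: assumes "\<bar>a - x\<bar> \<le> 1/2" shows "w a \<le> 2 * w x"
proof -
  have "x\<^sup>2 \<le> 2 * a\<^sup>2 + 2 * (x - a)\<^sup>2"
    by (smt (verit, best) power2_diff zero_le_power2 power2_sum)
  moreover have "(x - a)\<^sup>2 \<le> (1/2)\<^sup>2" using assms
    by (metis abs_minus_commute abs_ge_zero power2_abs power_mono)
  ultimately have "1 + x\<^sup>2 \<le> 2 * (1 + a\<^sup>2)" by (simp add: power2_eq_square)
  then show ?thesis unfolding w_def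
    by (simp add: add_pos_nonneg divide_simps) 
qed

lemma master:
  assumes hol: "f holomorphic_on strip" and bd: "\<And>z. z \<in> strip \<Longrightarrow> norm (f z) \<le> M * w (Re z)"
  shows "f \<in> H2_strip" "is_fourier_L2 (restr_R f) (FT (restr_R f))"
proof -
  have M0: "M \<ge> 0" using bd[of 0] w_pos[of 0] by (smt (verit) norm_ge_zero zero_le_mult_iff strip_def mem_Collect_eq zero_complex.sel)
  show "f \<in> H2_strip" unfolding H2_strip_def
  proof (intro CollectI conjI exI allI impI)
    show "f holomorphic_on strip" by (rule hol)
    fix y :: real assume y: "\<bar>y\<bar> < 1"
    have "(\<integral>\<^sup>+ t. ennreal ((norm (f (complex_of_real t + \<i> * complex_of_real y)))\<^sup>2) \<partial>lborel) \<le> (\<integral>\<^sup>+ t. ennreal (M\<^sup>2 * w t) \<partial>lborel)"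
    proof (intro nn_integral_mono ennreal_leI)
      fix t :: real
      have z: "complex_of_real t + \<i> * complex_of_real y \<in> strip" using y by (simp add: strip_def)
      have "norm (f (complex_of_real t + \<i> * complex_of_real y)) \<le> M * w t" using bd[OF z] by simp
      then have "(norm (f (complex_of_real t + \<i> * complex_of_real y)))\<^sup>2 \<le> (M * w t)\<^sup>2"
        by (rule power_mono) simp
      also have "\<dots> = M\<^sup>2 * (w t * w t)" by (simp add: power2_eq_square)
      also have "\<dots> \<le> M\<^sup>2 * w t" using w_le1[of t] w_pos[of t]
        by (intro mult_left_mono) (auto simp: mult_le_cancel_right1)
      finally show "(norm (f (complex_of_real t + \<i> * complex_of_real y)))\<^sup>2 \<le> M\<^sup>2 * w t" .
    qed
    also have "\<dots> = ennreal (M\<^sup>2 * pi)" by (rule w_nn) simp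
    finally show "(\<integral>\<^sup>+ t. ennreal ((norm (f (complex_of_real t + \<i> * complex_of_real y)))\<^sup>2) \<partial>lborel) \<le> ennreal (M\<^sup>2 * pi)" .
  qed
  define u' where "u' x = deriv f (complex_of_real x)" for x
  have der: "(restr_R f has_vector_derivative u' x) (at x)" for x
    unfolding restr_R_def u'_def
    by (rule has_vector_derivative_real_field, rule holomorphic_derivI[OF hol open_strip real_in_strip])
  have cf: "continuous_on strip f" using hol by (rule holomorphic_on_imp_continuous_on)
  have hd: "deriv f holomorphic_on strip" by (rule holomorphic_deriv[OF hol open_strip])
  have cd: "continuous_on strip (deriv f)" using hd by (rule holomorphic_on_imp_continuous_on)
  have cu: "continuous_on UNIV (restr_R f)" unfolding restr_R_def
    by (rule continuous_on_compose2[OF cf]) (auto intro: continuous_intros simp: real_in_strip)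
  have cu': "continuous_on UNIV u'" unfolding u'_def[abs_def]
    by (rule continuous_on_compose2[OF cd]) (auto intro: continuous_intros simp: real_in_strip)
  have ub: "norm (restr_R f x) \<le> M * w x" for x
    using bd[OF real_in_strip[of x]] by (simp add: restr_R_def)
  have ub': "norm (u' x) \<le> (4 * M) * w x" for x
  proof -
    have sub: "cball (complex_of_real x) (1/2) \<subseteq> strip"
    proof
      fix z assume "z \<in> cball (complex_of_real x) (1/2)"
      then have "norm (z - complex_of_real x) \<le> 1/2" by (simp add: dist_norm norm_minus_commute)
      moreover have "\<bar>Im z\<bar> \<le> norm (z - complex_of_real x)" using abs_Im_le_cmod[of "z - complex_of_real x"] by simp
      ultimately show "z \<in> strip" by (simp add: strip_def)
    qed
    have "norm ((deriv ^^ 1) f (complex_of_real x)) \<le> fact 1 * (2 * M * w x) / (1/2) ^ 1"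
    proof (rule Cauchy_inequality)
      show "f holomorphic_on ball (complex_of_real x) (1/2)"
        using hol sub ball_subset_cball holomorphic_on_subset by blast
      show "continuous_on (cball (complex_of_real x) (1/2)) f"
        using cf sub continuous_on_subset by blast
      fix z assume "norm (complex_of_real x - z) = 1/2"
      then have zc: "z \<in> cball (complex_of_real x) (1/2)" by (simp add: dist_norm)
      have "\<bar>Re z - x\<bar> \<le> norm (z - complex_of_real x)" using abs_Re_le_cmod[of "z - complex_of_real x"] by simp
      also have "\<dots> = 1/2" using \<open>norm (complex_of_real x - z) = 1/2\<close> by (simp add: norm_minus_commute)
      finally have "w (Re z) \<le> 2 * w x" by (rule w_shift)
      then have "M * w (Re z) \<le> M * (2 * w x)" using M0 by (simp add: mult_left_mono)
      moreover have "norm (f z) \<le> M * w (Re z)" using bd[of z] sub zc by blast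
      ultimately show "norm (f z) \<le> 2 * M * w x" by simp
    qed simp
    then show ?thesis by (simp add: u'_def)
  qed
  show "is_fourier_L2 (restr_R f) (FT (restr_R f))"
    by (rule fourier_L2_of_bounds[OF der cu cu' ub ub'])
qed

definition jf :: "real \<Rightarrow> real \<Rightarrow> real" where "jf c x = (1 - cos (c * x)) / x\<^sup>2"

lemma one_minus_cos_le: "1 - cos t \<le> t\<^sup>2 / 2" for t :: real
proof -
  have "cos t = cos (2 * (t/2))" by simp
  also have "\<dots> = 1 - 2 * (sin (t/2))\<^sup>2" by (rule cos_double_sin)
  finally have e: "1 - cos t = 2 * (sin (t/2))\<^sup>2" by simp
  have "(sin (t/2))\<^sup>2 \<le> (t/2)\<^sup>2"
    using abs_sin_x_le_abs_x[of "t/2"] by (metis abs_ge_zero power2_abs power_mono)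
  then show ?thesis unfolding e by (simp add: power_divide)
qed

lemma jf_nonneg: "0 \<le> jf c x" unfolding jf_def by simp

lemma jf_bound: "jf c x \<le> (c\<^sup>2 + 4) * w x"
proof (cases "x = 0")
  case True then show ?thesis using w_pos[of x] by (simp add: jf_def add_pos_nonneg)
next
  case False
  have x2: "x\<^sup>2 > 0" using False by simp
  have wx: "w x = 1 / (1 + x\<^sup>2)" by (simp add: w_def divide_inverse)
  show ?thesis
  proof (cases "x\<^sup>2 \<le> 1")
    case True
    have "jf c x \<le> ((c * x)\<^sup>2 / 2) / x\<^sup>2" unfolding jf_def
      by (rule divide_right_mono[OF one_minus_cos_le]) simp
    also have "\<dots> = c\<^sup>2 / 2" using x2 by (simp add: power_mult_distrib)
    also have "\<dots> \<le> (c\<^sup>2 + 4) / (1 + x\<^sup>2)" using True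
      by (intro frac_le) (auto simp: add_pos_nonneg)
    finally show ?thesis by (simp add: wx)
  next
    case F: False
    have "jf c x \<le> 2 / x\<^sup>2" unfolding jf_def
      by (rule divide_right_mono) (auto simp: cos_ge_minus_one)
    also have "\<dots> \<le> 4 / (1 + x\<^sup>2)" using F x2 by (simp add: frac_le divide_simps)
    also have "\<dots> \<le> (c\<^sup>2 + 4) / (1 + x\<^sup>2)" by (intro divide_right_mono) (auto simp: add_pos_nonneg)
    finally show ?thesis by (simp add: wx)
  qed
qed

lemma jf_meas[measurable]: "jf c \<in> borel_measurable borel"
  unfolding jf_def[abs_def] by measurable

lemma jf_int: "integrable lborel (jf c)"
proof (rule Bochner_Integration.integrable_bound[of _ "\<lambda>x. (c\<^sup>2 + 4) * w x"])
  show "integrable lborel (\<lambda>x. (c\<^sup>2 + 4) * w x)" using w_int by simp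
  show "AE x in lborel. norm (jf c x) \<le> norm ((c\<^sup>2 + 4) * w x)"
    using jf_bound jf_nonneg w_pos by (auto intro!: AE_I2 simp: abs_mult add_pos_nonneg less_imp_le)
qed simp

definition K :: real where "K = integral\<^sup>L lborel (jf 1)"

lemma J_scale: "integral\<^sup>L lborel (jf c) = \<bar>c\<bar> * K"
proof (cases "c = 0")
  case True then show ?thesis by (simp add: jf_def[abs_def])
next
  case False
  have "K = \<bar>c\<bar> * integral\<^sup>L lborel (\<lambda>x. jf 1 (0 + c * x))"
    unfolding K_def using lborel_integral_real_affine[OF False, of "jf 1" 0] by simp
  also have "(\<lambda>x. jf 1 (0 + c * x)) = (\<lambda>x. jf c x / c\<^sup>2)"
    by (auto simp: fun_eq_iff jf_def power_mult_distrib)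
  also have "integral\<^sup>L lborel (\<lambda>x. jf c x / c\<^sup>2) = integral\<^sup>L lborel (jf c) / c\<^sup>2" by simp
  finally have eq: "K = \<bar>c\<bar> * (integral\<^sup>L lborel (jf c) / c\<^sup>2)" .
  have c2: "c\<^sup>2 = \<bar>c\<bar> * \<bar>c\<bar>" by (simp add: power2_eq_square abs_mult_self_eq)
  have "K = integral\<^sup>L lborel (jf c) / \<bar>c\<bar>" unfolding eq using False
    by (cases "c > 0") (auto simp: power2_eq_square field_simps)
  then show ?thesis using False by (simp add: field_simps)
qed

lemma K_pos: "K > 0"
proof -
  have "integral\<^sup>L lborel (\<lambda>x. indicator {2..3::real} x * (1/9::real)) \<le> integral\<^sup>L lborel (jf 1)"
  proof (rule integral_mono)
    show "integrable lborel (\<lambda>x. indicator {2..3::real} x * (1/9::real))"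
      by (rule integrable_mult_left) (simp add: integrable_indicator_iff)
    show "integrable lborel (jf 1)" by (rule jf_int)
    fix x :: real
    show "indicator {2..3} x * (1/9) \<le> jf 1 x"
    proof (cases "x \<in> {2..3}")
      case True
      have "cos x < 0" using True pi_gt3 pi_less_4 by (intro cos_lt_zero_pi) auto
      moreover have "x\<^sup>2 \<le> 9" using True by (auto simp: power2_eq_square intro: order.trans[OF mult_mono[of x 3 x 3]])
      moreover have "x\<^sup>2 > 0" using True by auto
      ultimately have "1/9 \<le> (1 - cos x) / x\<^sup>2" by (simp add: divide_simps)
      then show ?thesis using True by (simp add: jf_def)
    qed (simp add: jf_nonneg)
  qed
  then show ?thesis unfolding K_def by simp
qed

lemma cos_prod_id: "(1 - cos a) * cos b = (1 - cos (a + b)) / 2 + (1 - cos (a - b)) / 2 - (1 - cos b)" for a b :: real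
  by (simp add: cos_add cos_diff field_simps)

lemma jf_cos: "jf pi x * cos (2 * pi * \<eta> * x) = (jf (pi + 2 * pi * \<eta>) x + jf (pi - 2 * pi * \<eta>) x) / 2 - jf (2 * pi * \<eta>) x"
proof -
  have "jf pi x * cos (2 * pi * \<eta> * x) = ((1 - cos (pi * x)) * cos (2 * pi * \<eta> * x)) / x\<^sup>2" by (simp add: jf_def)
  also have "\<dots> = ((1 - cos (pi * x + 2 * pi * \<eta> * x)) / 2 + (1 - cos (pi * x - 2 * pi * \<eta> * x)) / 2 - (1 - cos (2 * pi * \<eta> * x))) / x\<^sup>2"
    by (simp only: cos_prod_id)
  also have "\<dots> = (jf (pi + 2 * pi * \<eta>) x + jf (pi - 2 * pi * \<eta>) x) / 2 - jf (2 * pi * \<eta>) x"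
    by (simp add: jf_def ring_distribs add_divide_distrib diff_divide_distrib mult.assoc mult.left_commute)
  finally show ?thesis .
qed

lemma int_jf_cos: "integral\<^sup>L lborel (\<lambda>x. jf pi x * cos (2 * pi * \<eta> * x)) = K * (\<bar>pi + 2 * pi * \<eta>\<bar> + \<bar>pi - 2 * pi * \<eta>\<bar>) / 2 - K * \<bar>2 * pi * \<eta>\<bar>"
  unfolding jf_cos
  by (simp add: jf_int Bochner_Integration.integral_diff Bochner_Integration.integral_add J_scale field_simps)

lemma int_jf_sin: "integral\<^sup>L lborel (\<lambda>x. jf pi x * sin (2 * pi * \<eta> * x)) = 0"
proof -
  let ?g = "\<lambda>x. jf pi x * sin (2 * pi * \<eta> * x)"
  have "integral\<^sup>L lborel ?g = \<bar>-1\<bar> *\<^sub>R integral\<^sup>L lborel (\<lambda>x. ?g (0 + (-1) * x))"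
    by (rule lborel_integral_real_affine) simp
  also have "(\<lambda>x. ?g (0 + (-1) * x)) = (\<lambda>x. - ?g x)" by (auto simp: fun_eq_iff jf_def)
  finally show ?thesis by simp
qed

definition hB :: "complex \<Rightarrow> complex" where "hB z = 1 - cos (complex_of_real pi * z)"
definition G1 :: "complex \<Rightarrow> complex" where "G1 = (\<lambda>z. if z = 0 then deriv hB 0 else (hB z - hB 0) / (z - 0))"
definition Bf :: "complex \<Rightarrow> complex" where "Bf = (\<lambda>z. if z = 0 then deriv G1 0 else (G1 z - G1 0) / (z - 0))"

lemma hB_hol: "hB holomorphic_on UNIV"
  unfolding hB_def[abs_def] by (intro holomorphic_intros)

lemma G1_hol: "G1 holomorphic_on UNIV"
  unfolding G1_def by (rule pole_lemma_open[OF hB_hol]) simp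

lemma Bf_hol: "Bf holomorphic_on UNIV"
  unfolding Bf_def by (rule pole_lemma_open[OF G1_hol]) simp

lemma hB0: "hB 0 = 0" by (simp add: hB_def)

lemma dhB0: "deriv hB 0 = 0"
proof -
  have "(hB has_field_derivative (complex_of_real pi * sin (complex_of_real pi * 0))) (at 0)"
    unfolding hB_def[abs_def] by (auto intro!: derivative_eq_intros)
  then show ?thesis by (simp add: DERIV_imp_deriv)
qed

lemma G10: "G1 0 = 0" by (simp add: G1_def dhB0)

lemma Bf_eq: "z \<noteq> 0 \<Longrightarrow> Bf z = (1 - cos (complex_of_real pi * z)) / z\<^sup>2"
  by (simp add: Bf_def G1_def G10 hB0 dhB0 hB_def power2_eq_square)

lemma Bf_real: "x \<noteq> 0 \<Longrightarrow> Bf (complex_of_real x) = complex_of_real (jf pi x)"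
  by (simp add: Bf_eq jf_def cos_of_real[symmetric])

lemma Bf_cont: "continuous_on A Bf"
  using Bf_hol holomorphic_on_imp_continuous_on holomorphic_on_subset by blast

lemma Bf_bound: "\<exists>MB. \<forall>z\<in>strip. norm (Bf z) \<le> MB * w (Re z)"
proof -
  define Kc where "Kc = {z. \<bar>Re z\<bar> \<le> 1 \<and> \<bar>Im z\<bar> \<le> 1}"
  have "closed Kc" unfolding Kc_def
    by (intro closed_Collect_conj closed_Collect_le continuous_intros)
  moreover have "bounded Kc"
  proof -
    have "Kc \<subseteq> cball 0 2"
    proof
      fix z assume "z \<in> Kc"
      then have "norm z \<le> 2" unfolding Kc_def using cmod_le[of z] by auto
      then show "z \<in> cball 0 2" by simp
    qed
    then show ?thesis using bounded_cball bounded_subset by blast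
  qed
  ultimately have "compact Kc" by (simp add: compact_eq_bounded_closed)
  then have "compact (Bf ` Kc)" by (rule compact_continuous_image[OF Bf_cont])
  then obtain B0 where B0: "B0 > 0" "\<And>y. y \<in> Bf ` Kc \<Longrightarrow> norm y \<le> B0"
    using compact_imp_bounded bounded_pos by metis
  define MB where "MB = 2 * B0 + 2 * (1 + exp pi)"
  have "norm (Bf z) \<le> MB * w (Re z)" if z: "z \<in> strip" for z
  proof (cases "\<bar>Re z\<bar> \<le> 1")
    case True
    then have "z \<in> Kc" using z by (simp add: Kc_def strip_def)
    then have n: "norm (Bf z) \<le> B0" using B0 by blast
    have "(Re z)\<^sup>2 \<le> 1" using power_mono[OF True abs_ge_zero, of 2] by simp
    then have "1 \<le> 2 * w (Re z)" by (rule wb1)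
    then have "B0 \<le> B0 * (2 * w (Re z))" using B0 by simp
    also have "\<dots> \<le> MB * w (Re z)" unfolding MB_def using w_pos[of "Re z"]
      by (simp add: algebra_simps add_pos_nonneg)
    finally show ?thesis using n by linarith
  next
    case False
    then have z0: "z \<noteq> 0" by auto
    have "norm (cos (complex_of_real pi * z)) \<le> exp \<bar>Im (complex_of_real pi * z)\<bar>"
      using cmod_cos_le_exp[of 1 "complex_of_real pi * z"] by simp
    also have "\<dots> \<le> exp pi" using z by (simp add: strip_def abs_mult)
    finally have cb: "norm (cos (complex_of_real pi * z)) \<le> exp pi" .
    have n1: "norm (1 - cos (complex_of_real pi * z)) \<le> 1 + exp pi"
      using norm_triangle_ineq4[of 1 "cos (complex_of_real pi * z)"] cb by simp
    have "(Re z)\<^sup>2 \<le> (norm z)\<^sup>2" using power_mono[OF abs_Re_le_cmod[of z] abs_ge_zero, of 2] by simp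
    moreover have "(Re z)\<^sup>2 > 0" using False by auto
    ultimately have n2: "1 / (norm z)\<^sup>2 \<le> 1 / (Re z)\<^sup>2" by (simp add: frac_le)
    have "norm (Bf z) = norm (1 - cos (complex_of_real pi * z)) / (norm z)\<^sup>2"
      using z0 by (simp add: Bf_eq norm_divide norm_power)
    also have "\<dots> \<le> (1 + exp pi) * (1 / (Re z)\<^sup>2)"
      using n1 n2 by (simp add: divide_inverse mult_mono')
    also have "\<dots> \<le> (1 + exp pi) * (2 * w (Re z))"
      using wb2[of "Re z"] False abs_square_le_1[of "Re z"] by (intro mult_left_mono) (auto simp: abs_le_square_iff add_pos_nonneg less_imp_le)
    also have "\<dots> \<le> MB * w (Re z)" unfolding MB_def using w_pos[of "Re z"] B0
      by (simp add: algebra_simps)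
    finally show ?thesis .
  qed
  then show ?thesis by blast
qed

lemma cis_split: "cis (- 2 * pi * x * \<eta>) = complex_of_real (cos (2 * pi * \<eta> * x)) - \<i> * complex_of_real (sin (2 * pi * \<eta> * x))"
  by (simp add: complex_eq_iff mult.commute mult.left_commute)

lemma FT_Bf: "FT (restr_R Bf) \<eta> = complex_of_real (K * (\<bar>pi + 2 * pi * \<eta>\<bar> + \<bar>pi - 2 * pi * \<eta>\<bar>) / 2 - K * \<bar>2 * pi * \<eta>\<bar>)"
proof -
  have meas1: "(\<lambda>x. restr_R Bf x * cis (- 2 * pi * x * \<eta>)) \<in> borel_measurable lborel"
  proof -
    have "continuous_on UNIV (restr_R Bf)" unfolding restr_R_def
      by (rule continuous_on_compose2[OF Bf_cont]) (auto intro: continuous_intros)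
    then have [measurable]: "restr_R Bf \<in> borel_measurable borel" by (rule borel_measurable_continuous_onI)
    show ?thesis by measurable
  qed
  have "FT (restr_R Bf) \<eta> = integral\<^sup>L lborel (\<lambda>x. complex_of_real (jf pi x * cos (2 * pi * \<eta> * x)) - \<i> * complex_of_real (jf pi x * sin (2 * pi * \<eta> * x)))"
    unfolding FT_def
  proof (rule integral_cong_AE[OF meas1])
    show "(\<lambda>x. complex_of_real (jf pi x * cos (2 * pi * \<eta> * x)) - \<i> * complex_of_real (jf pi x * sin (2 * pi * \<eta> * x))) \<in> borel_measurable lborel"
      by measurable
    show "AE x in lborel. restr_R Bf x * cis (- 2 * pi * x * \<eta>) = complex_of_real (jf pi x * cos (2 * pi * \<eta> * x)) - \<i> * complex_of_real (jf pi x * sin (2 * pi * \<eta> * x))"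
      using AE_lborel_singleton[of 0]
    proof eventually_elim
      case (elim x)
      have "restr_R Bf x = complex_of_real (jf pi x)" using elim by (simp add: restr_R_def Bf_real)
      then show ?case unfolding cis_split by (simp add: algebra_simps)
    qed
  qed
  also have "\<dots> = complex_of_real (integral\<^sup>L lborel (\<lambda>x. jf pi x * cos (2 * pi * \<eta> * x))) - \<i> * complex_of_real (integral\<^sup>L lborel (\<lambda>x. jf pi x * sin (2 * pi * \<eta> * x)))"
  proof -
    have i1: "integrable lborel (\<lambda>x. jf pi x * cos (2 * pi * \<eta> * x))"
      by (rule Bochner_Integration.integrable_bound[OF jf_int[of pi]])
         (auto intro!: AE_I2 mult_left_le simp: abs_mult jf_nonneg abs_cos_le_one)
    have i2: "integrable lborel (\<lambda>x. jf pi x * sin (2 * pi * \<eta> * x))"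
      by (rule Bochner_Integration.integrable_bound[OF jf_int[of pi]])
         (auto intro!: AE_I2 mult_left_le simp: abs_mult jf_nonneg abs_sin_le_one)
    have ci1: "integrable lborel (\<lambda>x. complex_of_real (jf pi x * cos (2 * pi * \<eta> * x)))"
      using i1 by (simp only: complex_of_real_integrable_eq)
    have ci2: "integrable lborel (\<lambda>x. \<i> * complex_of_real (jf pi x * sin (2 * pi * \<eta> * x)))"
      by (rule integrable_mult_right) (simp only: complex_of_real_integrable_eq i2)
    show ?thesis unfolding Bochner_Integration.integral_diff[OF ci1 ci2] integral_mult_right_zero integral_complex_of_real ..
  qed
  also have "\<dots> = complex_of_real (K * (\<bar>pi + 2 * pi * \<eta>\<bar> + \<bar>pi - 2 * pi * \<eta>\<bar>) / 2 - K * \<bar>2 * pi * \<eta>\<bar>)"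
    by (simp add: int_jf_cos int_jf_sin)
  finally show ?thesis .
qed

lemma FT_Bf_zero: assumes "\<bar>\<eta>\<bar> \<ge> 1/2" shows "FT (restr_R Bf) \<eta> = 0"
proof -
  have "K * (\<bar>pi + 2 * pi * \<eta>\<bar> + \<bar>pi - 2 * pi * \<eta>\<bar>) / 2 - K * \<bar>2 * pi * \<eta>\<bar> = 0"
  proof (cases "\<eta> \<ge> 0")
    case True
    then have "\<eta> \<ge> 1/2" using assms by simp
    then have "pi * 1 \<le> pi * (2 * \<eta>)" by (intro mult_left_mono) auto
    then have a: "pi \<le> 2 * pi * \<eta>" by simp
    have e1: "\<bar>pi + 2 * pi * \<eta>\<bar> = pi + 2 * pi * \<eta>" using a pi_gt_zero by (smt (verit))
    have e2: "\<bar>pi - 2 * pi * \<eta>\<bar> = 2 * pi * \<eta> - pi" using a pi_gt_zero by (smt (verit))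
    have e3: "\<bar>2 * pi * \<eta>\<bar> = 2 * pi * \<eta>" using a pi_gt_zero by (smt (verit))
    show ?thesis unfolding e1 e2 e3 by (simp add: algebra_simps)
  next
    case False
    then have "\<eta> \<le> -1/2" using assms by simp
    then have "pi * 1 \<le> pi * (- 2 * \<eta>)" by (intro mult_left_mono) auto
    then have a: "pi \<le> - (2 * pi * \<eta>)" by simp
    have e1: "\<bar>pi + 2 * pi * \<eta>\<bar> = - (2 * pi * \<eta>) - pi" using a pi_gt_zero by (smt (verit))
    have e2: "\<bar>pi - 2 * pi * \<eta>\<bar> = pi - 2 * pi * \<eta>" using a pi_gt_zero by (smt (verit))
    have e3: "\<bar>2 * pi * \<eta>\<bar> = - (2 * pi * \<eta>)" using a pi_gt_zero by (smt (verit))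
    show ?thesis unfolding e1 e2 e3 by (simp add: algebra_simps)
  qed
  then show ?thesis unfolding FT_Bf by (metis of_real_0)
qed

lemma FT_Bf_0: "FT (restr_R Bf) 0 \<noteq> 0"
  unfolding FT_Bf using K_pos by simp

definition r0 :: real where "r0 = exp (-8)"
definition qf :: "complex \<Rightarrow> complex" where "qf z = exp (2 * complex_of_real pi * \<i> * z)"
definition U :: "complex \<Rightarrow> complex" where "U z = (qf z - complex_of_real r0) / (1 - complex_of_real r0 * qf z)"

lemma r0_pos: "r0 > 0" and r0_lt1: "r0 < 1" by (auto simp: r0_def)

lemma qf_real: "qf (complex_of_real y) = cis (2 * pi * y)"
  by (simp add: qf_def cis_conv_exp mult.commute mult.left_commute)

lemma norm_qf: "norm (qf z) = exp (- 2 * pi * Im z)"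
  by (simp add: qf_def norm_exp_eq_Re)

lemma norm_qf_strip: "z \<in> strip \<Longrightarrow> norm (qf z) \<le> exp (2 * pi)"
proof -
  assume "z \<in> strip"
  then have "- Im z \<le> 1" by (auto simp: strip_def abs_less_iff)
  then have "pi * (- Im z) \<le> pi * 1" by (intro mult_left_mono) auto
  then show ?thesis unfolding norm_qf by simp
qed

definition \<delta>0 :: real where "\<delta>0 = 1 - exp (2 * pi - 8)"

lemma \<delta>0_pos: "\<delta>0 > 0"
  unfolding \<delta>0_def using pi_less_4 by simp

lemma denom_bound: "z \<in> strip \<Longrightarrow> norm (1 - complex_of_real r0 * qf z) \<ge> \<delta>0"
proof -
  assume z: "z \<in> strip"
  have "norm (complex_of_real r0 * qf z) \<le> r0 * exp (2 * pi)"
    using norm_qf_strip[OF z] r0_pos by (simp add: norm_mult mult_left_mono)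
  also have "\<dots> = exp (2 * pi - 8)" by (simp add: r0_def exp_add[symmetric])
  finally have a: "norm (complex_of_real r0 * qf z) \<le> exp (2 * pi - 8)" .
  have "1 - norm (complex_of_real r0 * qf z) \<le> norm (1 - complex_of_real r0 * qf z)"
    using norm_triangle_ineq2[of 1 "complex_of_real r0 * qf z"] by simp
  then show ?thesis using a unfolding \<delta>0_def by linarith
qed

lemma denom_nz: "z \<in> strip \<Longrightarrow> 1 - complex_of_real r0 * qf z \<noteq> 0"
  using denom_bound \<delta>0_pos by force

definition MU :: real where "MU = (exp (2 * pi) + r0) / \<delta>0"

lemma U_bound: "z \<in> strip \<Longrightarrow> norm (U z) \<le> MU"
proof -
  assume z: "z \<in> strip"
  have "norm (qf z - complex_of_real r0) \<le> exp (2 * pi) + r0"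
    using norm_triangle_ineq4[of "qf z" "complex_of_real r0"] norm_qf_strip[OF z] r0_pos by simp
  moreover have "norm (1 - complex_of_real r0 * qf z) \<ge> \<delta>0" by (rule denom_bound[OF z])
  moreover have "0 \<le> exp (2 * pi) + r0" using r0_pos by (simp add: add_nonneg_nonneg less_imp_le)
  ultimately show ?thesis unfolding U_def MU_def norm_divide
    using \<delta>0_pos by (intro frac_le) auto
qed

lemma shift_strip: "z \<in> strip \<Longrightarrow> z + complex_of_real s \<in> strip"
  by (simp add: strip_def)

lemma U_shift_hol: "(\<lambda>z. U (z + complex_of_real s)) holomorphic_on strip"
  unfolding U_def qf_def
  using denom_nz[OF shift_strip] unfolding qf_def
  by (intro holomorphic_intros) auto

lemma norm_U_real: "norm (U (complex_of_real y)) = 1"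
proof -
  let ?q = "cis (2 * pi * y)"
  define t where "t = 2 * pi * y"
  have c: "(cos t)\<^sup>2 + (sin t)\<^sup>2 = 1" by simp
  have A: "(norm (?q - complex_of_real r0))\<^sup>2 = (cos t - r0)\<^sup>2 + (sin t)\<^sup>2"
    unfolding cmod_power2 t_def by simp
  have B: "(norm (1 - complex_of_real r0 * ?q))\<^sup>2 = (1 - r0 * cos t)\<^sup>2 + (r0 * sin t)\<^sup>2"
    unfolding cmod_power2 t_def by simp
  have "(cos t - r0)\<^sup>2 + (sin t)\<^sup>2 = (1 - r0 * cos t)\<^sup>2 + (r0 * sin t)\<^sup>2"
    using c by algebra
  then have "(norm (?q - complex_of_real r0))\<^sup>2 = (norm (1 - complex_of_real r0 * ?q))\<^sup>2"
    using A B by simp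
  then have "norm (?q - complex_of_real r0) = norm (1 - complex_of_real r0 * ?q)"
    by (simp add: power2_eq_iff_nonneg)
  moreover have "1 - complex_of_real r0 * ?q \<noteq> 0"
    using denom_nz[OF real_in_strip[of y]] by (simp add: qf_real)
  ultimately show ?thesis by (simp add: U_def qf_real norm_divide)
qed

lemma U_series: "(\<lambda>k. complex_of_real r0 ^ k * (qf (complex_of_real y) ^ (k+1) - complex_of_real r0 * qf (complex_of_real y) ^ k)) sums U (complex_of_real y)"
proof -
  let ?q = "qf (complex_of_real y)"
  let ?r = "complex_of_real r0"
  have nq: "norm ?q = 1" by (simp add: qf_real)
  have "norm (?r * ?q) < 1" using r0_pos r0_lt1 nq by (simp add: norm_mult)
  then have "(\<lambda>k. (?r * ?q) ^ k) sums (1 / (1 - ?r * ?q))" by (rule geometric_sums)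
  then have "(\<lambda>k. (?q - ?r) * (?r * ?q) ^ k) sums ((?q - ?r) * (1 / (1 - ?r * ?q)))" by (rule sums_mult)
  moreover have "(\<lambda>k. (?q - ?r) * (?r * ?q) ^ k) = (\<lambda>k. ?r ^ k * (?q ^ (k+1) - ?r * ?q ^ k))"
    by (auto simp: fun_eq_iff power_mult_distrib algebra_simps)
  ultimately show ?thesis by (simp add: U_def)
qed

definition gs :: "real \<Rightarrow> complex \<Rightarrow> complex" where "gs s z = Bf z * U (z + complex_of_real s)"

lemma gs_hol: "gs s holomorphic_on strip"
  unfolding gs_def[abs_def]
  by (intro holomorphic_on_mult U_shift_hol holomorphic_on_subset[OF Bf_hol]) auto

lemma Bf_bound': obtains MB where "MB \<ge> 0" "\<And>z. z \<in> strip \<Longrightarrow> norm (Bf z) \<le> MB * w (Re z)"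
proof -
  obtain MB where MB: "\<forall>z\<in>strip. norm (Bf z) \<le> MB * w (Re z)" using Bf_bound by blast
  have "norm (Bf (complex_of_real 0)) \<le> MB * w (Re (complex_of_real 0))" using MB real_in_strip[of 0] by blast
  then have "0 \<le> MB * w 0" by (metis norm_ge_zero order.trans Re_complex_of_real)
  then have "MB \<ge> 0" using w_pos[of 0] by (simp add: zero_le_mult_iff)
  then show ?thesis using MB that by blast
qed

lemma gs_master: "gs s \<in> H2_strip" "is_fourier_L2 (restr_R (gs s)) (FT (restr_R (gs s)))"
proof -
  obtain MB where MB: "MB \<ge> 0" "\<And>z. z \<in> strip \<Longrightarrow> norm (Bf z) \<le> MB * w (Re z)" using Bf_bound' by blast
  have bd: "norm (gs s z) \<le> (MB * MU) * w (Re z)" if z: "z \<in> strip" for z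
  proof -
    have "norm (gs s z) = norm (Bf z) * norm (U (z + complex_of_real s))" by (simp add: gs_def norm_mult)
    also have "\<dots> \<le> (MB * w (Re z)) * MU"
      by (intro mult_mono MB(2)[OF z] U_bound[OF shift_strip[OF z]]) (use MB w_pos[of "Re z"] in auto)
    finally show ?thesis by (simp add: algebra_simps)
  qed
  show "gs s \<in> H2_strip" "is_fourier_L2 (restr_R (gs s)) (FT (restr_R (gs s)))"
    using master[OF gs_hol bd] by auto
qed

lemma BfR_cont: "continuous_on UNIV (\<lambda>x. Bf (complex_of_real x))"
  by (rule continuous_on_compose2[OF Bf_cont]) (auto intro: continuous_intros)

lemma qf_cont: "continuous_on A qf"
  unfolding qf_def[abs_def] by (intro continuous_intros)

definition Tf :: "nat \<Rightarrow> real \<Rightarrow> real \<Rightarrow> real \<Rightarrow> complex" where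
  "Tf j s \<xi> x = Bf (complex_of_real x) * qf (complex_of_real x + complex_of_real s) ^ j * cis (- 2 * pi * x * \<xi>)"

definition T :: "nat \<Rightarrow> real \<Rightarrow> real \<Rightarrow> complex" where
  "T j s \<xi> = integral\<^sup>L lborel (Tf j s \<xi>)"

lemma Tf_cont: "continuous_on UNIV (Tf j s \<xi>)"
  unfolding Tf_def[abs_def]
  by (intro continuous_intros BfR_cont continuous_on_compose2[OF qf_cont]) auto

lemma norm_qf_real_pow: "norm (qf (complex_of_real x + complex_of_real s) ^ j) = 1"
  using qf_real[of "x + s"] by (simp add: norm_power)

lemma Tf_int: "integrable lborel (Tf j s \<xi>)"
proof -
  obtain MB where MB: "MB \<ge> 0" "\<And>z. z \<in> strip \<Longrightarrow> norm (Bf z) \<le> MB * w (Re z)" using Bf_bound' by blast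
  show ?thesis
  proof (rule Bochner_Integration.integrable_bound[of _ "\<lambda>x. MB * w x"])
    show "integrable lborel (\<lambda>x. MB * w x)" using w_int by simp
    show "Tf j s \<xi> \<in> borel_measurable lborel"
      using Tf_cont by (simp add: borel_measurable_continuous_onI)
    show "AE x in lborel. norm (Tf j s \<xi> x) \<le> norm (MB * w x)"
      using MB(2)[OF real_in_strip] MB(1) w_pos
      by (auto intro!: AE_I2 simp: Tf_def norm_mult norm_qf_real_pow abs_mult less_imp_le)
  qed
qed

lemma T_eq: "T j s \<xi> = cis (2 * pi * j * s) * FT (restr_R Bf) (\<xi> - real j)"
proof -
  have "Tf j s \<xi> x = cis (2 * pi * j * s) * (restr_R Bf x * cis (- 2 * pi * x * (\<xi> - real j)))" for x
  proof -
    have "qf (complex_of_real x + complex_of_real s) ^ j * cis (- 2 * pi * x * \<xi>) = cis (2 * pi * j * s) * cis (- 2 * pi * x * (\<xi> - real j))"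
    proof -
      have "qf (complex_of_real x + complex_of_real s) ^ j = cis (real j * (2 * pi * (x + s)))"
        unfolding of_real_add[symmetric] qf_real by (rule Complex.DeMoivre)
      moreover have "cis (real j * (2 * pi * (x + s))) * cis (- 2 * pi * x * \<xi>) = cis (real j * (2 * pi * (x + s)) + - 2 * pi * x * \<xi>)"
        by (simp only: cis_mult)
      moreover have "cis (2 * pi * j * s) * cis (- 2 * pi * x * (\<xi> - real j)) = cis (2 * pi * j * s + - 2 * pi * x * (\<xi> - real j))"
        by (simp only: cis_mult)
      moreover have "real j * (2 * pi * (x + s)) + - 2 * pi * x * \<xi> = 2 * pi * j * s + - 2 * pi * x * (\<xi> - real j)"
        by (simp add: algebra_simps)
      ultimately show ?thesis by simp
    qed
    then show ?thesis by (simp add: Tf_def restr_R_def mult.assoc mult.left_commute)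
  qed
  then have "Tf j s \<xi> = (\<lambda>x. cis (2 * pi * j * s) * (restr_R Bf x * cis (- 2 * pi * x * (\<xi> - real j))))" by auto
  then show ?thesis unfolding T_def FT_def by simp
qed

lemma floor_sep:
  fixes \<xi> :: real and j :: nat
  assumes "int j \<noteq> \<lfloor>\<xi> + 1/2\<rfloor>"
  shows "\<bar>\<xi> - real j\<bar> \<ge> 1/2"
proof -
  define n where "n = \<lfloor>\<xi> + 1/2\<rfloor>"
  have a1: "real_of_int n \<le> \<xi> + 1/2" unfolding n_def by (rule of_int_floor_le)
  have a2: "\<xi> + 1/2 < real_of_int n + 1" unfolding n_def by (rule real_of_int_floor_add_one_gt)
  have ne: "int j \<noteq> n" using assms by (simp add: n_def)
  show ?thesis
  proof (cases "int j < n")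
    case True
    then have "int j + 1 \<le> n" by simp
    then have "real_of_int (int j + 1) \<le> real_of_int n" by (simp only: of_int_le_iff)
    then have "real j + 1 \<le> real_of_int n" by simp
    then show ?thesis using a1 a2 by linarith
  next
    case False
    then have "n + 1 \<le> int j" using ne by simp
    then have "real_of_int (n + 1) \<le> real_of_int (int j)" by (simp only: of_int_le_iff)
    then have "real_of_int n + 1 \<le> real j" by simp
    then show ?thesis using a1 a2 by linarith
  qed
qed

lemma T_shift: "T j s \<xi> = cis (2 * pi * real_of_int \<lfloor>\<xi> + 1/2\<rfloor> * s) * T j 0 \<xi>"
proof (cases "int j = \<lfloor>\<xi> + 1/2\<rfloor>")
  case True
  then have e: "real_of_int \<lfloor>\<xi> + 1/2\<rfloor> = real j" by (metis of_int_of_nat_eq)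
  show ?thesis unfolding T_eq e by simp
next
  case False
  have "FT (restr_R Bf) (\<xi> - real j) = 0" by (rule FT_Bf_zero[OF floor_sep[OF False]])
  then show ?thesis unfolding T_eq by (simp only: mult_zero_right)
qed

lemma geo_bound: "(\<Sum>k<N. r0 ^ k) \<le> 1 / (1 - r0)"
proof -
  have "(\<Sum>k<N. r0 ^ k) = (1 - r0 ^ N) / (1 - r0)" using r0_lt1 by (simp add: sum_gp_strict)
  also have "\<dots> \<le> 1 / (1 - r0)" using r0_lt1 r0_pos by (intro divide_right_mono) auto
  finally show ?thesis .
qed

lemma F_series: "(\<lambda>k. complex_of_real r0 ^ k * (T (k+1) s \<xi> - complex_of_real r0 * T k s \<xi>)) sums FT (restr_R (gs s)) \<xi>"
proof -
  let ?r = "complex_of_real r0"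
  obtain MB where MB: "MB \<ge> 0" "\<And>z. z \<in> strip \<Longrightarrow> norm (Bf z) \<le> MB * w (Re z)" using Bf_bound' by blast
  define S where "S N x = (\<Sum>k<N. ?r ^ k * (Tf (k+1) s \<xi> x - ?r * Tf k s \<xi> x))" for N x
  define f where "f x = restr_R (gs s) x * cis (- 2 * pi * x * \<xi>)" for x
  define q where "q x = qf (complex_of_real x + complex_of_real s)" for x
  have nq: "norm (q x ^ j) = 1" for x j unfolding q_def by (rule norm_qf_real_pow)
  have intk: "integrable lborel (\<lambda>x. ?r ^ k * (Tf (k+1) s \<xi> x - ?r * Tf k s \<xi> x))" for k
    by (intro integrable_mult_right Bochner_Integration.integrable_diff Tf_int)
  have intS: "integral\<^sup>L lborel (S N) = (\<Sum>k<N. ?r ^ k * (T (k+1) s \<xi> - ?r * T k s \<xi>))" for N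
  proof -
    have "integral\<^sup>L lborel (S N) = (\<Sum>k<N. integral\<^sup>L lborel (\<lambda>x. ?r ^ k * (Tf (k+1) s \<xi> x - ?r * Tf k s \<xi> x)))"
      unfolding S_def[abs_def] by (rule Bochner_Integration.integral_sum) (rule intk)
    also have "\<dots> = (\<Sum>k<N. ?r ^ k * (T (k+1) s \<xi> - ?r * T k s \<xi>))"
      by (intro sum.cong refl) (simp add: T_def Bochner_Integration.integral_diff Tf_int)
    finally show ?thesis .
  qed
  have Sform: "S N x = (Bf (complex_of_real x) * cis (- 2 * pi * x * \<xi>)) * (\<Sum>k<N. ?r ^ k * (q x ^ (k+1) - ?r * q x ^ k))" for N x
    unfolding S_def Tf_def q_def by (simp add: sum_distrib_left algebra_simps)
  have fform: "f x = (Bf (complex_of_real x) * cis (- 2 * pi * x * \<xi>)) * U (complex_of_real (x + s))" for x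
    unfolding f_def restr_R_def gs_def by (simp add: algebra_simps)
  have lim: "(\<lambda>N. integral\<^sup>L lborel (S N)) \<longlonglongrightarrow> integral\<^sup>L lborel f"
  proof (rule integral_dominated_convergence[where w = "\<lambda>x. (MB * (1 + r0) / (1 - r0)) * w x"])
    have "continuous_on UNIV (restr_R (gs s))" unfolding restr_R_def
      by (rule continuous_on_compose2[OF holomorphic_on_imp_continuous_on[OF gs_hol]]) (auto intro: continuous_intros real_in_strip)
    then have [measurable]: "restr_R (gs s) \<in> borel_measurable borel" by (rule borel_measurable_continuous_onI)
    show "f \<in> borel_measurable lborel" unfolding f_def[abs_def] by measurable
    show "S N \<in> borel_measurable lborel" for N
      unfolding S_def[abs_def] by (rule borel_measurable_integrable, rule Bochner_Integration.integrable_sum, rule intk)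
    show "integrable lborel (\<lambda>x. (MB * (1 + r0) / (1 - r0)) * w x)" using w_int by simp
    show "AE x in lborel. (\<lambda>N. S N x) \<longlonglongrightarrow> f x"
    proof (rule AE_I2)
      fix x
      have "(\<lambda>k. ?r ^ k * (q x ^ (k+1) - ?r * q x ^ k)) sums U (complex_of_real (x + s))"
        unfolding q_def of_real_add[symmetric] by (rule U_series)
      then have "(\<lambda>N. \<Sum>k<N. ?r ^ k * (q x ^ (k+1) - ?r * q x ^ k)) \<longlonglongrightarrow> U (complex_of_real (x + s))"
        by (simp add: sums_def)
      then show "(\<lambda>N. S N x) \<longlonglongrightarrow> f x" unfolding Sform fform by (intro tendsto_intros)
    qed
    show "AE x in lborel. norm (S N x) \<le> (MB * (1 + r0) / (1 - r0)) * w x" for N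
    proof (rule AE_I2)
      fix x
      have nB: "norm (Bf (complex_of_real x)) \<le> MB * w x" using MB(2)[OF real_in_strip[of x]] by simp
      have "norm (\<Sum>k<N. ?r ^ k * (q x ^ (k+1) - ?r * q x ^ k)) \<le> (\<Sum>k<N. norm (?r ^ k * (q x ^ (k+1) - ?r * q x ^ k)))"
        by (rule norm_sum)
      also have "\<dots> \<le> (\<Sum>k<N. r0 ^ k * (1 + r0))"
      proof (rule sum_mono)
        fix k
        have "norm (q x ^ (k+1) - ?r * q x ^ k) \<le> norm (q x ^ (k+1)) + norm (?r * q x ^ k)" by (rule norm_triangle_ineq4)
        also have "\<dots> = 1 + r0" using nq[of x "k+1"] nq[of x k] r0_pos by (simp add: norm_mult)
        finally have "norm (q x ^ (k+1) - ?r * q x ^ k) \<le> 1 + r0" .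
        then show "norm (?r ^ k * (q x ^ (k+1) - ?r * q x ^ k)) \<le> r0 ^ k * (1 + r0)"
          using r0_pos by (simp add: norm_mult norm_power mult_left_mono)
      qed
      also have "\<dots> = (1 + r0) * (\<Sum>k<N. r0 ^ k)" by (simp add: sum_distrib_left mult.commute)
      also have "\<dots> \<le> (1 + r0) * (1 / (1 - r0))" using geo_bound r0_pos by (intro mult_left_mono) auto
      finally have nS: "norm (\<Sum>k<N. ?r ^ k * (q x ^ (k+1) - ?r * q x ^ k)) \<le> (1 + r0) / (1 - r0)" by simp
      have "norm (S N x) = norm (Bf (complex_of_real x)) * norm (\<Sum>k<N. ?r ^ k * (q x ^ (k+1) - ?r * q x ^ k))"
        unfolding Sform by (simp add: norm_mult)
      also have "\<dots> \<le> (MB * w x) * ((1 + r0) / (1 - r0))"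
        by (intro mult_mono nB nS) (use MB(1) w_pos[of x] in auto)
      finally show "norm (S N x) \<le> (MB * (1 + r0) / (1 - r0)) * w x" by (simp add: algebra_simps)
    qed
  qed
  then have "(\<lambda>N. \<Sum>k<N. ?r ^ k * (T (k+1) s \<xi> - ?r * T k s \<xi>)) \<longlonglongrightarrow> FT (restr_R (gs s)) \<xi>"
    unfolding intS by (simp add: FT_def f_def[abs_def])
  then show ?thesis by (simp add: sums_def)
qed

lemma F_shift: "FT (restr_R (gs s)) \<xi> = cis (2 * pi * real_of_int \<lfloor>\<xi> + 1/2\<rfloor> * s) * FT (restr_R (gs 0)) \<xi>"
proof -
  let ?r = "complex_of_real r0"
  let ?c = "cis (2 * pi * real_of_int \<lfloor>\<xi> + 1/2\<rfloor> * s)"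
  have "(\<lambda>k. ?c * (?r ^ k * (T (k+1) 0 \<xi> - ?r * T k 0 \<xi>))) sums (?c * FT (restr_R (gs 0)) \<xi>)"
    by (rule sums_mult[OF F_series])
  moreover have "(\<lambda>k. ?c * (?r ^ k * (T (k+1) 0 \<xi> - ?r * T k 0 \<xi>))) = (\<lambda>k. ?r ^ k * (T (k+1) s \<xi> - ?r * T k s \<xi>))"
    by (subst (3 4) T_shift) (simp add: algebra_simps)
  ultimately have "(\<lambda>k. ?r ^ k * (T (k+1) s \<xi> - ?r * T k s \<xi>)) sums (?c * FT (restr_R (gs 0)) \<xi>)" by simp
  then show ?thesis using F_series[of s \<xi>] sums_unique2 by blast
qed

definition \<beta> :: complex where "\<beta> = FT (restr_R Bf) 0"

lemma \<beta>_nz: "\<beta> \<noteq> 0" unfolding \<beta>_def by (rule FT_Bf_0)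

lemma T0_val: "T j 0 \<xi> = FT (restr_R Bf) (\<xi> - real j)"
  unfolding T_eq by simp

lemma F00: "FT (restr_R (gs 0)) 0 = - complex_of_real r0 * \<beta>"
proof -
  let ?r = "complex_of_real r0"
  let ?a = "\<lambda>k. ?r ^ k * (T (k+1) 0 0 - ?r * T k 0 0)"
  have Tz: "T j 0 0 = 0" if "j \<ge> 1" for j
    unfolding T0_val using that by (intro FT_Bf_zero) simp
  have "?a sums (\<Sum>k\<in>{0}. ?a k)"
  proof (rule sums_finite)
    fix k assume "k \<notin> {0::nat}"
    then show "?a k = 0" using Tz[of k] Tz[of "k+1"] by simp
  qed simp
  then have "?a sums (- ?r * \<beta>)" using Tz[of 1] by (simp add: T0_val \<beta>_def)
  then show ?thesis using F_series[of 0 0] sums_unique2 by blast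
qed

lemma F01: "FT (restr_R (gs 0)) 1 = (1 - complex_of_real r0 ^ 2) * \<beta>"
proof -
  let ?r = "complex_of_real r0"
  let ?a = "\<lambda>k. ?r ^ k * (T (k+1) 0 1 - ?r * T k 0 1)"
  have Tz: "T j 0 1 = 0" if "j \<noteq> 1" for j
  proof -
    have "\<bar>1 - real j\<bar> \<ge> 1/2" using that
      by (cases "j = 0") (auto simp: abs_if)
    then show ?thesis unfolding T0_val by (rule FT_Bf_zero)
  qed
  have T1: "T 1 0 1 = \<beta>" by (simp add: T0_val \<beta>_def)
  have "?a sums (\<Sum>k\<in>{0,1}. ?a k)"
  proof (rule sums_finite)
    fix k assume "k \<notin> {0::nat, 1}"
    then show "?a k = 0" using Tz[of k] Tz[of "k+1"] by simp
  qed simp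
  then have "?a sums ((1 - ?r ^ 2) * \<beta>)" using Tz[of 0] Tz[of "Suc (Suc 0)"] T1
    by (simp add: algebra_simps power2_eq_square)
  then show ?thesis using F_series[of 0 1] sums_unique2 by blast
qed

lemma floor_half: "\<lfloor>(0::real) + 1/2\<rfloor> = 0" by (simp add: floor_eq_iff)
lemma floor_three_half: "\<lfloor>(1::real) + 1/2\<rfloor> = 1" by (simp add: floor_eq_iff)

lemma FT_scale: "(\<forall>z\<in>strip. g1 z = c * g2 z) \<Longrightarrow> FT (restr_R g1) \<xi> = c * FT (restr_R g2) \<xi>"
proof -
  assume h: "\<forall>z\<in>strip. g1 z = c * g2 z"
  then have "restr_R g1 = (\<lambda>x. c * restr_R g2 x)" by (auto simp: restr_R_def fun_eq_iff real_in_strip)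
  then show ?thesis unfolding FT_def by (simp add: mult.assoc)
qed

lemma nonprop:
  assumes s: "s \<in> {0..<1}" and t: "t \<in> {0..<1}" and h: "\<forall>z\<in>strip. gs s z = c * gs t z"
  shows "s = t"
proof -
  have sc: "FT (restr_R (gs s)) \<xi> = c * FT (restr_R (gs t)) \<xi>" for \<xi> by (rule FT_scale[OF h])
  have r0nz: "complex_of_real r0 \<noteq> 0" using r0_pos by simp
  have "FT (restr_R (gs 0)) 0 = c * FT (restr_R (gs 0)) 0"
    using sc[of 0] unfolding F_shift[of s 0] F_shift[of t 0] floor_half by simp
  moreover have "FT (restr_R (gs 0)) 0 \<noteq> 0" unfolding F00 using r0nz \<beta>_nz by simp
  ultimately have c1: "c = 1" by simp
  have nz1: "FT (restr_R (gs 0)) 1 \<noteq> 0"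
  proof -
    have "complex_of_real r0 ^ 2 \<noteq> 1"
    proof
      assume "complex_of_real r0 ^ 2 = 1"
      then have "r0 ^ 2 = 1" by (metis of_real_eq_1_iff of_real_power)
      then show False using r0_pos r0_lt1 mult_strict_mono[of r0 1 r0 1] by (simp add: power2_eq_square)
    qed
    then show ?thesis unfolding F01 using \<beta>_nz by simp
  qed
  have "cis (2 * pi * s) * FT (restr_R (gs 0)) 1 = cis (2 * pi * t) * FT (restr_R (gs 0)) 1"
    using sc[of 1] unfolding F_shift[of s 1] F_shift[of t 1] floor_three_half c1 by simp
  then have "cis (2 * pi * s) = cis (2 * pi * t)" using nz1 by simp
  then have "cis (2 * pi * s) / cis (2 * pi * t) = 1" by simp
  then have "cis (2 * pi * (s - t)) = 1" by (simp add: cis_divide right_diff_distrib)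
  then have "Re (cis (2 * pi * (s - t))) = Re 1" by (rule arg_cong)
  then have "cos (2 * pi * (s - t)) = 1" by simp
  then obtain n :: int where n: "2 * pi * (s - t) = real_of_int n * 2 * pi" by (auto simp: cos_one_2pi_int)
  then have "s - t = real_of_int n" by simp
  moreover have "\<bar>s - t\<bar> < 1" using s t by auto
  ultimately have "n = 0" by linarith
  then show ?thesis using \<open>s - t = real_of_int n\<close> by simp
qed

lemma gs_real_norm: "norm (gs s (complex_of_real x)) = norm (Bf (complex_of_real x))"
proof -
  have "norm (gs s (complex_of_real x)) = norm (Bf (complex_of_real x)) * norm (U (complex_of_real (x + s)))"
    by (simp only: gs_def norm_mult of_real_add)
  also have "\<dots> = norm (Bf (complex_of_real x))" by (simp only: norm_U_real mult_1_right)
  finally show ?thesis .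
qed

theorem theorem4p2:
  shows "\<exists>f \<in> H2_strip. \<exists>P \<subseteq> H2_strip.
           uncountable P \<and> (\<forall>g \<in> P. pauli_partner f g) \<and>
           (\<forall>g1 \<in> P. \<forall>g2 \<in> P. g1 \<noteq> g2 \<longrightarrow>
              \<not> (\<exists>c::complex. \<forall>z \<in> strip. g1 z = c * g2 z))"
proof (rule bexI[of _ "gs 0"])
  show "gs 0 \<in> H2_strip" by (rule gs_master(1))
  let ?P = "gs ` {0..<1}"
  have sub: "?P \<subseteq> H2_strip" using gs_master(1) by blast
  have inj: "inj_on gs {0..<1}"
  proof (rule inj_onI)
    fix s t assume s: "s \<in> {0..<1::real}" and t: "t \<in> {0..<1::real}" and e: "gs s = gs t"
    show "s = t" by (rule nonprop[OF s t, of 1]) (simp add: e)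
  qed
  have unc: "uncountable ?P"
  proof
    assume "countable ?P"
    then have "countable {0..<1::real}" using countable_image_inj_on inj by blast
    then show False using uncountable_half_open_interval_1[of 0 1] by simp
  qed
  have pp: "pauli_partner (gs 0) g" if "g \<in> ?P" for g
  proof -
    obtain s where g: "g = gs s" using \<open>g \<in> ?P\<close> by blast
    show ?thesis unfolding pauli_partner_def
    proof (intro conjI allI exI)
      show "norm (g (complex_of_real x)) = norm (gs 0 (complex_of_real x))" for x
        unfolding g gs_real_norm ..
      show "is_fourier_L2 (restr_R (gs 0)) (FT (restr_R (gs 0)))" by (rule gs_master(2))
      show "is_fourier_L2 (restr_R g) (FT (restr_R g))" unfolding g by (rule gs_master(2))
      show "norm (FT (restr_R g) \<xi>) = norm (FT (restr_R (gs 0)) \<xi>)" for \<xi>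
        unfolding g F_shift[of s \<xi>] by (simp add: norm_mult)
    qed
  qed
  have dist: "\<not> (\<exists>c::complex. \<forall>z \<in> strip. g1 z = c * g2 z)" if g1P: "g1 \<in> ?P" and g2P: "g2 \<in> ?P" and ne: "g1 \<noteq> g2" for g1 g2
  proof
    assume "\<exists>c::complex. \<forall>z \<in> strip. g1 z = c * g2 z"
    then obtain c where c: "\<forall>z \<in> strip. g1 z = c * g2 z" by blast
    obtain s where s: "s \<in> {0..<1}" "g1 = gs s" using g1P by blast
    obtain t where t: "t \<in> {0..<1}" "g2 = gs t" using g2P by blast
    have "s = t" by (rule nonprop[OF s(1) t(1), of c]) (use c s t in simp)
    then show False using ne s t by simp
  qed
  show "\<exists>P \<subseteq> H2_strip. uncountable P \<and> (\<forall>g \<in> P. pauli_partner (gs 0) g) \<and>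
           (\<forall>g1 \<in> P. \<forall>g2 \<in> P. g1 \<noteq> g2 \<longrightarrow> \<not> (\<exists>c::complex. \<forall>z \<in> strip. g1 z = c * g2 z))"
  proof (intro exI[of _ ?P] conjI)
    show "?P \<subseteq> H2_strip" by (rule sub)
    show "uncountable ?P" by (rule unc)
    show "\<forall>g \<in> ?P. pauli_partner (gs 0) g" using pp by (rule ballI)
    show "\<forall>g1 \<in> ?P. \<forall>g2 \<in> ?P. g1 \<noteq> g2 \<longrightarrow> \<not> (\<exists>c::complex. \<forall>z \<in> strip. g1 z = c * g2 z)"
      using dist by blast
  qed
qed


end
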